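(* Let $b\in\mathbb{K}_{d,1}$ and $M>0$, and let $t_*$ be as below. There are constants $C_1=C_1(d,\alpha,M)>0$ and $C_2=C_2(d,\alpha,M)>0$ such that for all $a\in(0,M]$, $t\in(0,t_*]$ and $x,y\in\mathbb{R}^d$, $$p^{a,b}(t,x,y)\ge C_1t^{-d/2}\exp\Big(-\frac{C_2|x-y|^2}{t}\Big).$$
   Context: Standing assumption: $d\ge2$, $\alpha\in(0,2)$. $M_b(r)=\sup_x\int_{|x-y|<r}|b(y)||x-y|^{1-d}dy$; $b\in\mathbb{K}_{d,1}$ iff $M_b(r)\to0$ as $r\downarrow0$. $p^a(t,x,y)=p^a(t,x-y)$ with $\int p^a(t,z)e^{iz\cdot\xi}dz=e^{-t(|\xi|^2+a^\alpha|\xi|^\alpha)}$; $p_0^{a,b}=p^a$, $p_k^{a,b}(t,x,y)=\int_0^t\int p_{k-1}^{a,b}(t-s,x,z)b(z)\cdot\nabla_zp^a(s,z,y)dzds$. $q^a_{d,\beta}(t,z)=t^{-d/2}e^{-\beta|z|^2/t}+t^{-d/2}\wedge\frac{a^\alpha t}{|z|^{d+\alpha}}$; $\beta_U>0$ is a constant such that for all $M,T$ there is $C_U>0$ with $p^a\le C_Uq^a_{d,\beta_U}$ on $(0,T]\times\mathbb{R}^d$ for $a\in(0,M]$. $t_*=t_*(d,\alpha,M,b)>0$ and $C_0=C_0(d,\alpha,M)\ge1$ are constants such that for all $a\in(0,M]$, $t\in(0,t_*]$, $x,y$: $\sum_k|p_k^{a,b}(t,x,y)|\le C_0q^a_{d,\beta_U/2}(t,x-y)$,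 and $\sum_kp_k^{a,b}(t,x,y)\ge C_0^{-1}t^{-d/2}$ whenever $|x-y|^2<t$. $p^{a,b}$ is the jointly continuous, nonnegative kernel equal to $\sum_kp_k^{a,b}$ on $(0,t_*]\times\mathbb{R}^d\times\mathbb{R}^d$ and satisfying Chapman–Kolmogorov $p^{a,b}(t+s,x,y)=\int p^{a,b}(t,x,z)p^{a,b}(s,z,y)dz$ for all $t,s>0$. *)

theory Defs
  imports "HOL-Analysis.Analysis"
begin

text \<open>Dimension d = CARD('n); points of R^d are of type real^'n.\<close>

definition kato_M :: "(real^'n \<Rightarrow> real^'n) \<Rightarrow> real \<Rightarrow> ennreal" where
  "kato_M b r = (SUP x. \<integral>\<^sup>+ y. ennreal (indicator (ball x r) y * norm (b y)
       * dist x y powr (1 - real CARD('n))) \<partial>lborel)"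

definition kato_class :: "(real^'n \<Rightarrow> real^'n) set" where
  "kato_class = {b. b \<in> borel_measurable borel \<and> (kato_M b \<longlongrightarrow> 0) (at_right 0)}"

text \<open>Heat kernel p^a(t,z) of Delta + a^alpha Delta^{alpha/2}, by Fourier inversion of
  exp(-t(|xi|^2 + a^alpha |xi|^alpha)) (which is even, so only the cosine part remains).\<close>
definition pa :: "real \<Rightarrow> real \<Rightarrow> real \<Rightarrow> real^'n \<Rightarrow> real" where
  "pa \<alpha> a t z = (1 / (2 * pi) ^ CARD('n)) *
     (\<integral> \<xi>. exp (- t * ((norm \<xi>)\<^sup>2 + a powr \<alpha> * norm \<xi> powr \<alpha>)) * cos (inner z \<xi>) \<partial>lborel)"

definition grad :: "(real^'n \<Rightarrow> real) \<Rightarrow> real^'n \<Rightarrow> real^'n" where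
  "grad f x = (THE D. GDERIV f x :> D)"

primrec pk :: "real \<Rightarrow> real \<Rightarrow> (real^'n \<Rightarrow> real^'n) \<Rightarrow> nat \<Rightarrow> real \<Rightarrow> real^'n \<Rightarrow> real^'n \<Rightarrow> real" where
  "pk \<alpha> a b 0 = (\<lambda>t x y. pa \<alpha> a t (x - y))"
| "pk \<alpha> a b (Suc k) = (\<lambda>t x y.
     \<integral> s. indicator {0<..<t} s *
        (\<integral> z. pk \<alpha> a b k (t - s) x z * inner (b z) (grad (\<lambda>w. pa \<alpha> a s (w - y)) z) \<partial>lborel) \<partial>lborel)"

text \<open>q^a_{d,beta}(t,z); at z = 0 the term t^{-d/2} /\ a^alpha t/|z|^{d+alpha} equals t^{-d/2}.\<close>
definition qa :: "real \<Rightarrow> real \<Rightarrow> real \<Rightarrow> real \<Rightarrow> real^'n \<Rightarrow> real" where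
  "qa \<alpha> a \<beta> t z = t powr (- real CARD('n) / 2) * exp (- \<beta> * (norm z)\<^sup>2 / t)
     + (if z = 0 then t powr (- real CARD('n) / 2)
        else min (t powr (- real CARD('n) / 2)) (a powr \<alpha> * t / norm z powr (real CARD('n) + \<alpha>)))"

end

theory Submission
  imports Defs
begin


lemma shells:
  fixes f :: "real^'n \<Rightarrow> real" and u :: "real^'n"
  assumes meas: "f \<in> borel_measurable lborel" and nn: "\<And>z. 0 \<le> f z"
    and e: "e > real CARD('n)" and K: "K \<ge> 0"
    and near: "\<And>z. dist z u < 1 \<Longrightarrow> f z \<le> K"
    and far: "\<And>z. dist z u \<ge> 1 \<Longrightarrow> f z \<le> K * dist z u powr (- e)"
  shows "integrable lborel f"
proof -
  define g where "g j z = K * 2 powr e * 2 powr (- e * real j) * indicator (ball u (2^j)) z"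
    for j :: nat and z :: "real^'n"
  have e0: "e > 0" using e by (smt (verit) of_nat_0_le_iff)
  have gnn: "0 \<le> g j z" for j z using K by (simp add: g_def)
  have ex: "\<exists>j. f z \<le> g j z" for z
  proof (cases "dist z u < 1")
    case True
    have "1 \<le> 2 powr e" using e0 by (intro ge_one_powr_ge_zero) auto
    hence "K \<le> K * 2 powr e" using K by (simp add: mult_le_cancel_left1)
    moreover have "z \<in> ball u 1" using True by (simp add: dist_commute)
    ultimately show ?thesis using near[OF True] by (intro exI[of _ 0]) (simp add: g_def)
  next
    case False
    have "\<exists>j::nat. dist z u < 2^j" by (rule real_arch_pow) simp
    define j where "j = (LEAST j::nat. dist z u < 2^j)"
    have j1: "dist z u < 2^j" unfolding j_def by (rule LeastI_ex) fact
    have j0: "j \<noteq> 0" using j1 False by (cases j) auto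
    have "\<not> dist z u < 2^(j-1)" unfolding j_def
      by (rule not_less_Least) (use j0 in \<open>simp add: j_def[symmetric]\<close>)
    hence j2: "2^(j-1) \<le> dist z u" by simp
    have "dist z u powr (-e) \<le> (2^(j-1)) powr (-e)"
      by (rule powr_mono2') (use e0 j2 in auto)
    also have "(2^(j-1)::real) powr (-e) = 2 powr e * 2 powr (- e * real j)"
      using j0 by (simp add: powr_realpow[symmetric] powr_powr powr_add[symmetric] of_nat_diff algebra_simps)
    finally have "f z \<le> K * (2 powr e * 2 powr (- e * real j))"
      using far[of z] False K by (smt (verit) mult_left_mono)
    moreover have "z \<in> ball u (2^j)" using j1 by (simp add: dist_commute)
    ultimately show ?thesis by (intro exI[of _ j]) (simp add: g_def mult.assoc)
  qed
  have dom: "ennreal (f z) \<le> (\<Sum>j. ennreal (g j z))" for z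
  proof -
    obtain j where "f z \<le> g j z" using ex by blast
    hence "ennreal (f z) \<le> ennreal (g j z)" by (simp add: ennreal_leI)
    also have "\<dots> \<le> (\<Sum>j. ennreal (g j z))"
      using sum_le_suminf[OF summableI, of "{j}" "\<lambda>j. ennreal (g j z)"] by simp
    finally show ?thesis .
  qed
  define q where "q = (2::real) powr (real CARD('n) - e)"
  have q0: "0 < q" "q < 1" using e by (auto simp: q_def powr_less_one)
  define C where "C = K * 2 powr e * unit_ball_vol (real CARD('n))"
  have C0: "C \<ge> 0" using K by (simp add: C_def)
  have gint: "(\<integral>\<^sup>+z. ennreal (g j z) \<partial>lborel) = ennreal (C * q ^ j)" for j
  proof -
    have "(\<integral>\<^sup>+z. ennreal (g j z) \<partial>lborel)
        = (\<integral>\<^sup>+z. ennreal (K * 2 powr e * 2 powr (- e * real j)) * indicator (ball u (2^j)) z \<partial>lborel)"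
      by (intro nn_integral_cong) (simp add: g_def split: split_indicator)
    also have "\<dots> = ennreal (K * 2 powr e * 2 powr (- e * real j)) * emeasure lborel (ball u (2^j))"
      by (rule nn_integral_cmult_indicator) simp
    also have "\<dots> = ennreal (K * 2 powr e * 2 powr (- e * real j) * (unit_ball_vol (real CARD('n)) * (2^j)^CARD('n)))"
      using K by (simp add: emeasure_ball ennreal_mult)
    also have "K * 2 powr e * 2 powr (- e * real j) * (unit_ball_vol (real CARD('n)) * (2^j)^CARD('n)) = C * q ^ j"
    proof -
      have a: "((2::real)^j)^CARD('n) = 2 powr (real j * real CARD('n))"
        by (simp add: powr_realpow[symmetric] powr_powr)
      have b: "q ^ j = 2 powr ((real CARD('n) - e) * real j)"
        using q0 by (simp add: q_def powr_realpow[symmetric] powr_powr)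
      have c: "2 powr (- e * real j) * 2 powr (real j * real CARD('n)) = (2::real) powr ((real CARD('n) - e) * real j)"
        by (simp add: powr_add[symmetric] algebra_simps)
      show ?thesis unfolding a b C_def using c by (simp add: algebra_simps)
    qed
    finally show ?thesis .
  qed
  have "(\<integral>\<^sup>+z. ennreal (f z) \<partial>lborel) \<le> (\<integral>\<^sup>+z. (\<Sum>j. ennreal (g j z)) \<partial>lborel)"
    by (intro nn_integral_mono dom)
  also have "\<dots> = (\<Sum>j. \<integral>\<^sup>+z. ennreal (g j z) \<partial>lborel)"
  proof (rule nn_integral_suminf)
    fix j
    have "(\<lambda>z. g j z) \<in> borel_measurable lborel" unfolding g_def
      by (intro borel_measurable_times borel_measurable_const borel_measurable_indicator) simp
    then show "(\<lambda>z. ennreal (g j z)) \<in> borel_measurable lborel" by (rule measurable_compose) simp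
  qed
  also have "\<dots> = (\<Sum>j. ennreal (C * q ^ j))" by (simp add: gint)
  also have "\<dots> = ennreal (\<Sum>j. C * q ^ j)"
    by (rule suminf_ennreal2) (use C0 q0 in \<open>auto intro!: summable_mult summable_geometric\<close>)
  also have "\<dots> < \<infinity>" by simp
  finally show ?thesis
    by (intro integrableI_nonneg) (use meas nn in auto)
qed



lemma mid:
  fixes x y :: "real^'n" and r k :: real
  assumes r: "r > 0" and k: "k \<ge> 1" and d: "norm (x - y) \<le> (k + 1) * r"
  shows "\<exists>m. \<forall>z\<in>ball m (r/2). norm (x - z) \<le> k * r \<and> norm (z - y) < 2 * r"
proof (cases "norm (x - y) \<le> 3 * r / 2")
  case True
  show ?thesis
  proof (intro exI ballI conjI)
    fix z assume z: "z \<in> ball x (r/2)"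
    hence "norm (x - z) < r/2" by (simp add: dist_norm)
    moreover have "1 * r \<le> k * r" using k r by (intro mult_right_mono) auto
    ultimately show "norm (x - z) \<le> k * r" using r by linarith
    have "norm (z - y) \<le> norm (x - z) + norm (x - y)" by (metis norm_diff_triangle_le norm_minus_commute order_refl)
    thus "norm (z - y) < 2 * r" using True \<open>norm (x - z) < r/2\<close> by linarith
  qed
next
  case False
  define d0 where "d0 = norm (x - y)"
  have d0: "d0 > 0" using False r unfolding d0_def by linarith
  define m where "m = y + (3 * r / (2 * d0)) *\<^sub>R (x - y)"
  have lam: "0 \<le> 3 * r / (2 * d0)" "3 * r / (2 * d0) \<le> 1" using False r d0 by (auto simp: d0_def field_simps)
  have "norm (m - y) = \<bar>3 * r / (2 * d0)\<bar> * d0" by (simp add: m_def d0_def)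
  hence my: "norm (m - y) = 3 * r / 2" using lam d0 r by simp
  have "x - m = (1 - 3 * r / (2 * d0)) *\<^sub>R (x - y)" by (simp add: m_def algebra_simps)
  hence "norm (x - m) = \<bar>1 - 3 * r / (2 * d0)\<bar> * d0" by (simp add: d0_def)
  hence xm: "norm (x - m) = d0 - 3 * r / 2" using lam d0 r by (simp add: algebra_simps)
  show ?thesis
  proof (intro exI[of _ m] ballI conjI)
    fix z assume z: "z \<in> ball m (r/2)"
    hence mz: "norm (m - z) < r/2" by (simp add: dist_norm)
    have "norm (x - z) \<le> norm (x - m) + norm (m - z)" by (rule norm_diff_triangle_le[of _ m]) simp_all
    moreover have "(k + 1) * r = k * r + r" by (simp add: distrib_right)
    ultimately show "norm (x - z) \<le> k * r" using xm mz d d0_def by linarith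
    have "norm (z - y) \<le> norm (m - z) + norm (m - y)" by (metis norm_diff_triangle_le norm_minus_commute order_refl)
    thus "norm (z - y) < 2 * r" using my mz by linarith
  qed
qed

lemma sqrt_pow_powr:
  assumes "\<tau> > 0"
  shows "sqrt \<tau> ^ n = \<tau> powr (real n / 2)"
proof -
  have "sqrt \<tau> ^ n = (\<tau> powr (1/2)) ^ n" using assms by (simp add: powr_half_sqrt)
  also have "\<dots> = \<tau> powr (real n * (1/2))" using assms by (subst powr_power) auto
  finally show ?thesis by simp
qed

lemma chain:
  fixes p :: "real \<Rightarrow> real^'n \<Rightarrow> real^'n \<Rightarrow> real" and T c \<tau> :: real
  assumes nonneg: "\<And>t x y. t > 0 \<Longrightarrow> 0 \<le> p t x y"
    and CK: "\<And>t s x y. t > 0 \<Longrightarrow> s > 0 \<Longrightarrow> p (t + s) x y = (\<integral>z. p t x z * p s z y \<partial>lborel)"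
    and int: "\<And>t s x y. 0 < t \<Longrightarrow> t \<le> T \<Longrightarrow> 0 < s \<Longrightarrow> s \<le> T \<Longrightarrow>
               integrable lborel (\<lambda>z. p t x z * p s z y)"
    and diag: "\<And>t x y. 0 < t \<Longrightarrow> t \<le> T \<Longrightarrow> (norm (x - y))\<^sup>2 < t \<Longrightarrow>
               c * t powr (- real CARD('n) / 2) \<le> p t x y"
    and c: "c > 0" and \<tau>: "\<tau> > 0"
  shows "k \<ge> 1 \<Longrightarrow> real k * \<tau> \<le> T \<Longrightarrow> norm (x - y) \<le> real k * sqrt \<tau> / 2 \<Longrightarrow>
     c * \<tau> powr (- real CARD('n) / 2) * (c * unit_ball_vol (real CARD('n)) / 4 ^ CARD('n)) ^ (k - 1)
       \<le> p (real k * \<tau>) x y"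
proof (induction k arbitrary: x y)
  case 0
  then show ?case by simp
next
  case (Suc k)
  define B where "B = c * \<tau> powr (- real CARD('n) / 2)"
  define \<gamma> where "\<gamma> = c * unit_ball_vol (real CARD('n)) / 4 ^ CARD('n)"
  have B0: "B > 0" using c \<tau> by (simp add: B_def)
  have \<gamma>0: "\<gamma> > 0" using c by (simp add: \<gamma>_def)
  have st: "sqrt \<tau> > 0" using \<tau> by simp
  show ?case
  proof (cases "k = 0")
    case True
    have "norm (x - y) \<le> sqrt \<tau> / 2" using Suc.prems(3) True by simp
    hence "norm (x - y) < sqrt \<tau>" using st by linarith
    hence "(norm (x - y))\<^sup>2 < (sqrt \<tau>)\<^sup>2" by (intro power_strict_mono) auto
    hence "(norm (x - y))\<^sup>2 < \<tau>" using \<tau> by simp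
    thus ?thesis using diag[of \<tau> x y] Suc.prems True \<tau> by simp
  next
    case False
    hence k1: "k \<ge> 1" by simp
    have kT: "real k * \<tau> \<le> T" using Suc.prems(2) \<tau> by (simp add: algebra_simps)
    have "1 * \<tau> \<le> real (Suc k) * \<tau>" by (intro mult_right_mono) (use \<tau> in auto)
    hence tT: "\<tau> \<le> T" using Suc.prems(2) by linarith
    have kt0: "real k * \<tau> > 0" using k1 \<tau> by simp
    define r where "r = sqrt \<tau> / 2"
    have r0: "r > 0" using st by (simp add: r_def)
    have "norm (x - y) \<le> (real k + 1) * r" using Suc.prems(3) by (simp add: r_def algebra_simps)
    moreover have "real k \<ge> 1" using k1 by simp
    ultimately obtain m where m: "\<And>z. z \<in> ball m (r/2) \<Longrightarrow> norm (x - z) \<le> real k * r \<and> norm (z - y) < 2 * r"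
      using mid[OF r0, of "real k" x y] by blast
    define A where "A = B * \<gamma> ^ (k - 1)"
    have A0: "A > 0" using B0 \<gamma>0 by (simp add: A_def)
    have low: "A * B * indicator (ball m (r/2)) z \<le> p (real k * \<tau>) x z * p \<tau> z y" for z
    proof (cases "z \<in> ball m (r/2)")
      case True
      from m[OF True] have h1: "norm (x - z) \<le> real k * sqrt \<tau> / 2" and h2: "norm (z - y) < sqrt \<tau>"
        by (simp_all add: r_def)
      have "A \<le> p (real k * \<tau>) x z" using Suc.IH[OF k1 kT h1] by (simp add: A_def B_def \<gamma>_def)
      moreover have "(norm (z - y))\<^sup>2 < (sqrt \<tau>)\<^sup>2" using h2 by (intro power_strict_mono) auto
      hence "(norm (z - y))\<^sup>2 < \<tau>" using \<tau> by simp
      hence "B \<le> p \<tau> z y" using diag[OF \<tau> tT] by (simp add: B_def)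
      ultimately have "A * B \<le> p (real k * \<tau>) x z * p \<tau> z y"
        using A0 B0 by (intro mult_mono) auto
      thus ?thesis using True by simp
    next
      case False
      thus ?thesis using nonneg[OF kt0] nonneg[OF \<tau>] by simp
    qed
    have "A * B * measure lborel (ball m (r/2)) = (\<integral>z. A * B * indicator (ball m (r/2)) z \<partial>lborel)"
      by (simp add: emeasure_ball)
    also have "\<dots> \<le> (\<integral>z. p (real k * \<tau>) x z * p \<tau> z y \<partial>lborel)"
    proof (intro integral_mono low int kt0 kT \<tau> tT)
      have "integrable lborel (indicat_real (ball m (r/2)))"
        using emeasure_lborel_ball_finite[of m "r/2"] by (intro integrable_real_indicator) simp_all
      thus "integrable lborel (\<lambda>z. A * B * indicat_real (ball m (r/2)) z)" by simp
    qed
    also have "\<dots> = p (real k * \<tau> + \<tau>) x y" using CK[OF kt0 \<tau>] by simp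
    also have "real k * \<tau> + \<tau> = real (Suc k) * \<tau>" by (simp add: algebra_simps)
    finally have ineq: "A * B * measure lborel (ball m (r/2)) \<le> p (real (Suc k) * \<tau>) x y" .
    have "measure lborel (ball m (r/2)) = unit_ball_vol (real CARD('n)) * (r/2) ^ CARD('n)"
      using r0 by (simp add: content_ball)
    also have "(r/2) ^ CARD('n) = \<tau> powr (real CARD('n) / 2) / 4 ^ CARD('n)"
      using \<tau> by (simp add: r_def power_divide sqrt_pow_powr)
    finally have cb: "measure lborel (ball m (r/2)) = unit_ball_vol (real CARD('n)) * \<tau> powr (real CARD('n) / 2) / 4 ^ CARD('n)"
      by simp
    have "B * measure lborel (ball m (r/2)) = \<gamma>"
      using \<tau> by (simp add: cb B_def \<gamma>_def powr_minus field_simps)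
    hence eq: "A * B * measure lborel (ball m (r/2)) = B * \<gamma> ^ (Suc k - 1)"
      using k1 by (simp add: A_def algebra_simps power_eq_if)
    have "B * \<gamma> ^ (Suc k - 1) \<le> p (real (Suc k) * \<tau>) x y" using ineq unfolding eq .
    then show ?thesis unfolding B_def \<gamma>_def .
  qed
qed



lemma exp_neg_le:
  fixes y n :: real
  assumes y: "y > 0" and n: "n > 0"
  shows "exp (- y) \<le> (n / y) powr n"
proof -
  have "1 + y / n \<le> exp (y / n)" by (rule exp_ge_add_one_self)
  hence h: "y / n \<le> exp (y / n)" by linarith
  have "(y / n) powr n \<le> exp (y / n) powr n" using y n h by (intro powr_mono2) auto
  also have "exp (y / n) powr n = exp y" using n by (simp add: powr_def)
  finally have a: "(y / n) powr n \<le> exp y" .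
  have pos: "(y / n) powr n > 0" using y n by simp
  have "exp (- y) = inverse (exp y)" by (simp add: exp_minus)
  also have "\<dots> \<le> inverse ((y / n) powr n)" using a pos by (intro le_imp_inverse_le) auto
  also have "\<dots> = (n / y) powr n" using y n by (simp add: powr_divide)
  finally show ?thesis .
qed

lemma qa_le_global:
  fixes v :: "real^'n"
  assumes "t > 0" "\<beta> \<ge> 0"
  shows "qa \<alpha> a \<beta> t v \<le> 2 * t powr (- real CARD('n) / 2)"
proof -
  have "exp (- \<beta> * (norm v)\<^sup>2 / t) \<le> 1" using assms by (simp add: divide_nonneg_pos)
  hence "t powr (- real CARD('n) / 2) * exp (- \<beta> * (norm v)\<^sup>2 / t) \<le> t powr (- real CARD('n) / 2)"
    by (simp add: mult_left_le)
  moreover have "(if v = 0 then t powr (- real CARD('n) / 2)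
        else min (t powr (- real CARD('n) / 2)) (a powr \<alpha> * t / norm v powr (real CARD('n) + \<alpha>)))
      \<le> t powr (- real CARD('n) / 2)" by simp
  ultimately show ?thesis unfolding qa_def by linarith
qed

lemma qa_le_far:
  fixes v :: "real^'n"
  assumes t: "t > 0" and \<beta>: "\<beta> > 0" and \<alpha>: "0 < \<alpha>" "\<alpha> \<le> real CARD('n)" and v: "norm v \<ge> 1"
  shows "qa \<alpha> a \<beta> t v \<le> (t powr (- real CARD('n) / 2) * (real CARD('n) * t / \<beta>) powr real CARD('n)
           + a powr \<alpha> * t) * norm v powr (- (real CARD('n) + \<alpha>))"
proof -
  define N where "N = real CARD('n)"
  define r where "r = norm v"
  have N0: "N > 0" by (simp add: N_def)
  have r1: "r \<ge> 1" using v by (simp add: r_def)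
  have v0: "v \<noteq> 0" using v by auto
  have "exp (- (\<beta> * r\<^sup>2 / t)) \<le> (N / (\<beta> * r\<^sup>2 / t)) powr N"
    using r1 t \<beta> N0 by (intro exp_neg_le) auto
  also have "N / (\<beta> * r\<^sup>2 / t) = (N * t / \<beta>) * r powr (-2)"
    using r1 t \<beta> by (simp add: powr_minus_divide powr_realpow field_simps)
  also have "((N * t / \<beta>) * r powr (-2)) powr N = (N * t / \<beta>) powr N * r powr (- 2 * N)"
    using r1 t \<beta> N0 by (subst powr_mult) (auto simp: powr_powr)
  also have "r powr (- 2 * N) \<le> r powr (- (N + \<alpha>))"
    using r1 \<alpha> by (intro powr_mono) (auto simp: N_def)
  finally have g: "exp (- \<beta> * r\<^sup>2 / t) \<le> (N * t / \<beta>) powr N * r powr (- (N + \<alpha>))"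
    using t \<beta> N0 by (simp add: mult_left_mono)
  have m: "min (t powr (- N / 2)) (a powr \<alpha> * t / r powr (N + \<alpha>)) \<le> a powr \<alpha> * t * r powr (- (N + \<alpha>))"
  proof -
    have "a powr \<alpha> * t / r powr (N + \<alpha>) = a powr \<alpha> * t * r powr (- (N + \<alpha>))"
      using powr_minus[of r "N + \<alpha>"] by (simp add: divide_inverse)
    thus ?thesis by linarith
  qed
  have "qa \<alpha> a \<beta> t v = t powr (- N / 2) * exp (- \<beta> * r\<^sup>2 / t) + min (t powr (- N / 2)) (a powr \<alpha> * t / r powr (N + \<alpha>))"
    using v0 by (simp add: qa_def N_def r_def)
  also have "\<dots> \<le> t powr (- N / 2) * ((N * t / \<beta>) powr N * r powr (- (N + \<alpha>))) + a powr \<alpha> * t * r powr (- (N + \<alpha>))"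
    using g m by (intro add_mono mult_left_mono) auto
  also have "\<dots> = (t powr (- N / 2) * (N * t / \<beta>) powr N + a powr \<alpha> * t) * r powr (- (N + \<alpha>))"
    by (simp add: algebra_simps)
  finally show ?thesis by (simp add: N_def r_def)
qed



theorem lemma5p7:
  fixes \<alpha> M \<beta>U C0 :: real
  assumes dim: "CARD('n) \<ge> 2"
    and alpha: "0 < \<alpha>" "\<alpha> < 2"
    and M: "M > 0"
    and betaU: "\<beta>U > 0"
      "\<forall>M'>0. \<forall>T>0. \<exists>CU>0. \<forall>a\<in>{0<..M'}. \<forall>t\<in>{0<..T}. \<forall>z::real^'n.
          pa \<alpha> a t z \<le> CU * qa \<alpha> a \<beta>U t z"
    and C0: "C0 \<ge> 1"
  shows "\<exists>C1>0. \<exists>C2>0. \<forall>(b :: real^'n \<Rightarrow> real^'n) tstar (pab :: real \<Rightarrow> real \<Rightarrow> real^'n \<Rightarrow> real^'n \<Rightarrow> real).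
     b \<in> kato_class \<and> tstar > 0
     \<and> (\<forall>a\<in>{0<..M}. \<forall>t\<in>{0<..tstar}. \<forall>x y.
           summable (\<lambda>k. \<bar>pk \<alpha> a b k t x y\<bar>)
           \<and> (\<Sum>k. \<bar>pk \<alpha> a b k t x y\<bar>) \<le> C0 * qa \<alpha> a (\<beta>U / 2) t (x - y)
           \<and> ((norm (x - y))\<^sup>2 < t \<longrightarrow> (\<Sum>k. pk \<alpha> a b k t x y) \<ge> t powr (- real CARD('n) / 2) / C0))
     \<and> (\<forall>a\<in>{0<..M}.
           continuous_on ({0<..} \<times> UNIV \<times> UNIV) (\<lambda>(t, x, y). pab a t x y)
           \<and> (\<forall>t x y. t > 0 \<longrightarrow> pab a t x y \<ge> 0)
           \<and> (\<forall>t\<in>{0<..tstar}. \<forall>x y. pab a t x y = (\<Sum>k. pk \<alpha> a b k t x y))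
           \<and> (\<forall>t s x y. t > 0 \<longrightarrow> s > 0 \<longrightarrow>
                pab a (t + s) x y = (\<integral> z. pab a t x z * pab a s z y \<partial>lborel)))
     \<longrightarrow> (\<forall>a\<in>{0<..M}. \<forall>t\<in>{0<..tstar}. \<forall>x y.
            pab a t x y \<ge> C1 * t powr (- real CARD('n) / 2) * exp (- C2 * (norm (x - y))\<^sup>2 / t))"
  proof -
  define N where "N = real CARD('n)"
  have N2: "N \<ge> 2" using dim by (simp add: N_def)
  define c where "c = 1 / C0"
  have c0: "c > 0" using C0 by (simp add: c_def)
  define \<gamma>0 where "\<gamma>0 = c * unit_ball_vol (real CARD('n)) / 4 ^ CARD('n)"
  have \<gamma>00: "\<gamma>0 > 0" using c0 by (simp add: \<gamma>0_def)
  define \<gamma> where "\<gamma> = min \<gamma>0 (1/2)"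
  have \<gamma>pos: "\<gamma> > 0" "\<gamma> < 1" "\<gamma> \<le> \<gamma>0" using \<gamma>00 by (auto simp: \<gamma>_def)
  define C1 where "C1 = c * \<gamma>"
  define C2 where "C2 = - 4 * ln \<gamma>"
  have C1pos: "C1 > 0" using c0 \<gamma>pos by (simp add: C1_def)
  have C2pos: "C2 > 0" using \<gamma>pos by (simp add: C2_def)
  show ?thesis
  proof (rule exI[of _ C1], intro conjI C1pos, rule exI[of _ C2], intro conjI C2pos allI impI ballI)
    fix b :: "real^'n \<Rightarrow> real^'n" and tstar and pab :: "real \<Rightarrow> real \<Rightarrow> real^'n \<Rightarrow> real^'n \<Rightarrow> real"
    fix a t :: real and x y :: "real^'n"
    assume H: "b \<in> kato_class \<and> tstar > 0
     \<and> (\<forall>a\<in>{0<..M}. \<forall>t\<in>{0<..tstar}. \<forall>x y.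
           summable (\<lambda>k. \<bar>pk \<alpha> a b k t x y\<bar>)
           \<and> (\<Sum>k. \<bar>pk \<alpha> a b k t x y\<bar>) \<le> C0 * qa \<alpha> a (\<beta>U / 2) t (x - y)
           \<and> ((norm (x - y))\<^sup>2 < t \<longrightarrow> (\<Sum>k. pk \<alpha> a b k t x y) \<ge> t powr (- real CARD('n) / 2) / C0))
     \<and> (\<forall>a\<in>{0<..M}.
           continuous_on ({0<..} \<times> UNIV \<times> UNIV) (\<lambda>(t, x, y). pab a t x y)
           \<and> (\<forall>t x y. t > 0 \<longrightarrow> pab a t x y \<ge> 0)
           \<and> (\<forall>t\<in>{0<..tstar}. \<forall>x y. pab a t x y = (\<Sum>k. pk \<alpha> a b k t x y))
           \<and> (\<forall>t s x y. t > 0 \<longrightarrow> s > 0 \<longrightarrow>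
                pab a (t + s) x y = (\<integral> z. pab a t x z * pab a s z y \<partial>lborel)))"
      and a: "a \<in> {0<..M}" and t: "t \<in> {0<..tstar}"
    have a0: "a > 0" using a by simp
    have ts: "tstar > 0" using H by simp
    have S: "\<And>t x y. t \<in> {0<..tstar} \<Longrightarrow> summable (\<lambda>k. \<bar>pk \<alpha> a b k t x y\<bar>)
           \<and> (\<Sum>k. \<bar>pk \<alpha> a b k t x y\<bar>) \<le> C0 * qa \<alpha> a (\<beta>U / 2) t (x - y)
           \<and> ((norm (x - y))\<^sup>2 < t \<longrightarrow> (\<Sum>k. pk \<alpha> a b k t x y) \<ge> t powr (- real CARD('n) / 2) / C0)"
      using H a by blast
    have cont: "continuous_on ({0<..} \<times> UNIV \<times> UNIV) (\<lambda>(t, x, y). pab a t x y)" using H a by blast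
    have nonneg: "\<And>t x y. t > 0 \<Longrightarrow> 0 \<le> pab a t x y" using H a by blast
    have eqs: "\<And>t x y. t \<in> {0<..tstar} \<Longrightarrow> pab a t x y = (\<Sum>k. pk \<alpha> a b k t x y)" using H a by blast
    have CK: "\<And>t s x y. t > 0 \<Longrightarrow> s > 0 \<Longrightarrow> pab a (t + s) x y = (\<integral> z. pab a t x z * pab a s z y \<partial>lborel)"
      using H a by blast
    have up: "pab a t' x' y' \<le> C0 * qa \<alpha> a (\<beta>U / 2) t' (x' - y')" if "t' \<in> {0<..tstar}" for t' x' y'
    proof -
      have "pab a t' x' y' \<le> \<bar>\<Sum>k. pk \<alpha> a b k t' x' y'\<bar>" using eqs[OF that] by simp
      also have "\<dots> \<le> (\<Sum>k. \<bar>pk \<alpha> a b k t' x' y'\<bar>)" using S[OF that] by (intro summable_rabs) blast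
      also have "\<dots> \<le> C0 * qa \<alpha> a (\<beta>U / 2) t' (x' - y')" using S[OF that] by blast
      finally show ?thesis .
    qed
    have diag: "c * t' powr (- real CARD('n) / 2) \<le> pab a t' x' y'"
      if "0 < t'" "t' \<le> tstar" "(norm (x' - y'))\<^sup>2 < t'" for t' x' y'
      using S[of t' x' y'] eqs[of t' x' y'] that by (simp add: c_def)
    have meas1: "(\<lambda>z. pab a t' x' z) \<in> borel_measurable lborel" if "t' > 0" for t' x'
    proof -
      have "continuous_on UNIV (\<lambda>z. (\<lambda>(t, x, y). pab a t x y) (t', x', z))"
        by (rule continuous_on_compose2[OF cont]) (use that in \<open>auto intro!: continuous_intros\<close>)
      thus ?thesis by (simp add: borel_measurable_continuous_onI)
    qed
    have meas2: "(\<lambda>z. pab a s z y') \<in> borel_measurable lborel" if "s > 0" for s y'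
    proof -
      have "continuous_on UNIV (\<lambda>z. (\<lambda>(t, x, y). pab a t x y) (s, z, y'))"
        by (rule continuous_on_compose2[OF cont]) (use that in \<open>auto intro!: continuous_intros\<close>)
      thus ?thesis by (simp add: borel_measurable_continuous_onI)
    qed
    have int1: "integrable lborel (\<lambda>z. pab a t' x' z)" if "t' \<in> {0<..tstar}" for t' x'
    proof -
      have t'0: "t' > 0" using that by simp
      define Kf where "Kf = t' powr (- real CARD('n) / 2) * (real CARD('n) * t' / (\<beta>U / 2)) powr real CARD('n)
           + a powr \<alpha> * t'"
      have Kf0: "Kf \<ge> 0" unfolding Kf_def using t'0 by simp
      define K where "K = C0 * (2 * t' powr (- real CARD('n) / 2) + Kf)"
      show ?thesis
      proof (rule shells[where u = x' and e = "real CARD('n) + \<alpha>" and K = K])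
        show "(\<lambda>z. pab a t' x' z) \<in> borel_measurable lborel" using meas1 t'0 by blast
        show "0 \<le> pab a t' x' z" for z using nonneg t'0 by blast
        show "real CARD('n) < real CARD('n) + \<alpha>" using alpha by simp
        show "0 \<le> K" unfolding K_def using C0 Kf0 t'0 by simp
        show "pab a t' x' z \<le> K" if "dist z x' < 1" for z
        proof -
          have "pab a t' x' z \<le> C0 * qa \<alpha> a (\<beta>U / 2) t' (x' - z)" using up[OF \<open>t' \<in> _\<close>] .
          also have "\<dots> \<le> C0 * (2 * t' powr (- real CARD('n) / 2))"
            using C0 t'0 betaU(1) by (intro mult_left_mono qa_le_global) auto
          also have "\<dots> \<le> K" unfolding K_def using C0 Kf0 by (intro mult_left_mono) auto
          finally show ?thesis .
        qed
        show "pab a t' x' z \<le> K * dist z x' powr (- (real CARD('n) + \<alpha>))" if "dist z x' \<ge> 1" for z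
        proof -
          have nz: "norm (x' - z) = dist z x'" by (simp add: dist_norm norm_minus_commute)
          have "pab a t' x' z \<le> C0 * qa \<alpha> a (\<beta>U / 2) t' (x' - z)" using up[OF \<open>t' \<in> _\<close>] .
          also have "\<dots> \<le> C0 * (Kf * dist z x' powr (- (real CARD('n) + \<alpha>)))"
            unfolding Kf_def nz[symmetric]
            using C0 t'0 betaU(1) alpha N2 that nz
            by (intro mult_left_mono qa_le_far) (auto simp: N_def)
          also have "\<dots> \<le> K * dist z x' powr (- (real CARD('n) + \<alpha>))"
          proof -
            have "C0 * Kf \<le> K" unfolding K_def using C0 t'0 by (intro mult_left_mono) auto
            hence "(C0 * Kf) * dist z x' powr (- (real CARD('n) + \<alpha>)) \<le> K * dist z x' powr (- (real CARD('n) + \<alpha>))"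
              by (intro mult_right_mono) auto
            thus ?thesis by (simp add: mult.assoc)
          qed
          finally show ?thesis .
        qed
      qed
    qed
    have int: "integrable lborel (\<lambda>z. pab a t1 x' z * pab a s z y')"
      if "0 < t1" "t1 \<le> tstar" "0 < s" "s \<le> tstar" for t1 s x' y'
    proof (rule Bochner_Integration.integrable_bound)
      define Bb where "Bb = C0 * (2 * s powr (- real CARD('n) / 2))"
      have "0 \<le> Bb" unfolding Bb_def using C0 by simp
      show "integrable lborel (\<lambda>z. Bb * pab a t1 x' z)" using int1 that by simp
      show "(\<lambda>z. pab a t1 x' z * pab a s z y') \<in> borel_measurable lborel"
        using meas1 meas2 that by (intro borel_measurable_times) auto
      show "AE z in lborel. norm (pab a t1 x' z * pab a s z y') \<le> norm (Bb * pab a t1 x' z)"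
      proof (intro AE_I2)
        fix z
        have p1: "0 \<le> pab a t1 x' z" "0 \<le> pab a s z y'" using nonneg that by auto
        have "pab a s z y' \<le> C0 * qa \<alpha> a (\<beta>U / 2) s (z - y')" using up that by simp
        also have "\<dots> \<le> Bb" unfolding Bb_def
          using C0 that betaU(1) by (intro mult_left_mono qa_le_global) auto
        finally have "pab a t1 x' z * pab a s z y' \<le> pab a t1 x' z * Bb"
          using p1 by (intro mult_left_mono) auto
        thus "norm (pab a t1 x' z * pab a s z y') \<le> norm (Bb * pab a t1 x' z)"
          using p1 \<open>0 \<le> Bb\<close> by (simp add: abs_mult mult.commute)
      qed
    qed
    have t0: "t > 0" "t \<le> tstar" using t by auto
    define \<delta> where "\<delta> = (norm (x - y))\<^sup>2 / t"
    have \<delta>0: "\<delta> \<ge> 0" using t0 by (simp add: \<delta>_def)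
    define n :: nat where "n = nat \<lceil>4 * \<delta>\<rceil> + 1"
    have n1: "n \<ge> 1" by (simp add: n_def)
    have cz: "0 \<le> \<lceil>4 * \<delta>\<rceil>" using \<delta>0 by simp
    have rn: "real n = real_of_int \<lceil>4 * \<delta>\<rceil> + 1" unfolding n_def using cz by simp
    have nge: "real n \<ge> 4 * \<delta>" unfolding rn using le_of_int_ceiling[of "4 * \<delta>"] by linarith
    have nle: "real n - 1 \<le> 4 * \<delta> + 1" unfolding rn using ceiling_correct[of "4 * \<delta>"] by linarith
    define \<tau> where "\<tau> = t / real n"
    have \<tau>0: "\<tau> > 0" using t0 n1 by (simp add: \<tau>_def)
    have nt: "real n * \<tau> = t" using n1 by (simp add: \<tau>_def)
    have \<tau>t: "\<tau> \<le> t" using t0 n1 by (simp add: \<tau>_def divide_le_eq)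
    have dist_ok: "norm (x - y) \<le> real n * sqrt \<tau> / 2"
    proof (rule power2_le_imp_le)
      have "(real n * sqrt \<tau> / 2)\<^sup>2 = real n * (real n * \<tau>) / 4"
        using \<tau>0 by (simp add: power2_eq_square power_mult_distrib algebra_simps)
      also have "\<dots> = real n * t / 4" using nt by simp
      also have "\<dots> \<ge> 4 * \<delta> * t / 4" using nge t0 by (intro divide_right_mono mult_right_mono) auto
      also have "4 * \<delta> * t / 4 = (norm (x - y))\<^sup>2" using t0 by (simp add: \<delta>_def)
      finally show "(norm (x - y))\<^sup>2 \<le> (real n * sqrt \<tau> / 2)\<^sup>2" .
      show "0 \<le> real n * sqrt \<tau> / 2" using \<tau>0 by simp
    qed
    have ch: "c * \<tau> powr (- real CARD('n) / 2) * \<gamma>0 ^ (n - 1) \<le> pab a (real n * \<tau>) x y"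
      unfolding \<gamma>0_def
      by (rule chain[where p = "pab a" and T = tstar]) (use nonneg CK int diag c0 \<tau>0 n1 nt t0 dist_ok in auto)
    have e1: "t powr (- real CARD('n) / 2) \<le> \<tau> powr (- real CARD('n) / 2)"
      using \<tau>0 \<tau>t by (intro powr_mono2') auto
    have "\<gamma> * exp (- C2 * (norm (x - y))\<^sup>2 / t) = \<gamma> powr (1 + 4 * \<delta>)"
    proof -
      have "\<gamma> powr (1 + 4 * \<delta>) = exp (ln \<gamma> + ln \<gamma> * (4 * (norm (x - y))\<^sup>2) / t)"
        using \<gamma>pos t0 by (simp add: powr_def \<delta>_def algebra_simps add_divide_distrib)
      also have "\<dots> = \<gamma> * exp (ln \<gamma> * (4 * (norm (x - y))\<^sup>2) / t)"
        using \<gamma>pos by (simp add: exp_add)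
      finally show ?thesis by (simp add: C2_def algebra_simps)
    qed
    also have "\<dots> \<le> \<gamma> powr (real n - 1)"
      using \<gamma>pos nle by (intro powr_mono') auto
    also have "\<gamma> powr (real n - 1) = \<gamma> ^ (n - 1)"
      using \<gamma>pos n1 by (simp add: powr_realpow[symmetric] of_nat_diff)
    also have "\<dots> \<le> \<gamma>0 ^ (n - 1)" using \<gamma>pos by (intro power_mono) auto
    finally have e2: "\<gamma> * exp (- C2 * (norm (x - y))\<^sup>2 / t) \<le> \<gamma>0 ^ (n - 1)" .
    have "C1 * t powr (- real CARD('n) / 2) * exp (- C2 * (norm (x - y))\<^sup>2 / t)
        = c * t powr (- real CARD('n) / 2) * (\<gamma> * exp (- C2 * (norm (x - y))\<^sup>2 / t))"
      by (simp add: C1_def algebra_simps)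
    also have "\<dots> \<le> c * \<tau> powr (- real CARD('n) / 2) * \<gamma>0 ^ (n - 1)"
      using e1 e2 c0 \<gamma>pos by (intro mult_mono mult_left_mono) auto
    also have "\<dots> \<le> pab a t x y" using ch nt by simp
    finally show "C1 * t powr (- real CARD('n) / 2) * exp (- C2 * (norm (x - y))\<^sup>2 / t) \<le> pab a t x y" .
  qed
qed

end
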